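(* Let $A<\mathbb{R}$ be any subring. For any finite set $S\subseteq H(A)''$ there is a non-trivial element $h_S\in H(A)$ commuting with each element of $S$.
   Context: Let $\mathbb{P}^1=\mathbb{P}^1(\mathbb{R})$ with its usual topology (a circle) and the natural action of $\mathrm{PSL}_2(\mathbb{R})$. Let $G$ be the group of homeomorphisms of $\mathbb{P}^1$ which are piecewise in $\mathrm{PSL}_2(\mathbb{R})$ with finitely many pieces, each an interval. Let $\infty\in\mathbb{P}^1$ correspond to the first basis vector of $\mathbb{R}^2$ and $H<G$ its stabilizer. For a subring $A<\mathbb{R}$, $P_A$ is the set of fixed points of hyperbolic elements of $\mathrm{PSL}_2(A)$, $G(A)$ is the subgroup of $G$ of elements piecewise in $\mathrm{PSL}_2(A)$ with all interval endpoints in $P_A$, and $H(A)=G(A)\cap H$. $H(A)''$ denotes the second derived subgroup $[H(A)',H(A)']$, where $H(A)'=[H(A),H(A)]$. *)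

theory Defs
  imports "HOL-Analysis.Analysis" "HOL-Algebra.Solvable_Groups" "HOL-Algebra.Bij"
begin

text \<open>The real projective line P^1(R) is modelled as real option:
  Some t is the point [t:1] and None is the point [1:0] = infinity
  (the line spanned by the first basis vector).\<close>

type_synonym p1 = "real option"

definition P1_open :: "p1 set \<Rightarrow> bool" where
  "P1_open U \<longleftrightarrow> open {t. Some t \<in> U} \<and>
     (None \<in> U \<longrightarrow> (\<exists>M. \<forall>t. \<bar>t\<bar> > M \<longrightarrow> Some t \<in> U))"

definition P1_top :: "p1 topology" where
  "P1_top = topology P1_open"

text \<open>2x2 real matrices (a b; c d) as quadruples.\<close>
type_synonym mat2 = "real \<times> real \<times> real \<times> real"

definition SL2 :: "real set \<Rightarrow> mat2 set" where
  "SL2 A = {(a,b,c,d). a \<in> A \<and> b \<in> A \<and> c \<in> A \<and> d \<in> A \<and> a*d - b*c = 1}"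

text \<open>Natural (projective) action of a matrix on P^1: [x:y] maps to [ax+by : cx+dy].
  It only depends on the class in PSL2.\<close>
fun mobius :: "mat2 \<Rightarrow> p1 \<Rightarrow> p1" where
  "mobius (a,b,c,d) (Some t) = (if c*t + d \<noteq> 0 then Some ((a*t + b)/(c*t + d)) else None)"
| "mobius (a,b,c,d) None = (if c \<noteq> 0 then Some (a/c) else None)"

definition is_subring :: "real set \<Rightarrow> bool" where
  "is_subring A \<longleftrightarrow> 1 \<in> A \<and> (\<forall>x\<in>A. \<forall>y\<in>A. x - y \<in> A \<and> x * y \<in> A)"

definition hyperbolic :: "mat2 \<Rightarrow> bool" where
  "hyperbolic M \<longleftrightarrow> (case M of (a,b,c,d) \<Rightarrow> \<bar>a + d\<bar> > 2)"

definition P_set :: "real set \<Rightarrow> p1 set" where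
  "P_set A = {p. \<exists>M\<in>SL2 A. hyperbolic M \<and> mobius M p = p}"

text \<open>G(A): homeomorphisms of P^1 which are piecewise in PSL2(A), with finitely
  many pieces; the pieces are the intervals (connected components) of the
  complement of a finite set of breakpoints lying in P_A.\<close>
definition G_A :: "real set \<Rightarrow> (p1 \<Rightarrow> p1) set" where
  "G_A A = {g. homeomorphic_map P1_top P1_top g \<and>
     (\<exists>B. finite B \<and> B \<subseteq> P_set A \<and>
        (\<forall>C \<in> connected_components_of (subtopology P1_top (UNIV - B)).
           \<exists>M \<in> SL2 A. \<forall>p\<in>C. g p = mobius M p))}"

definition H_A :: "real set \<Rightarrow> (p1 \<Rightarrow> p1) set" where
  "H_A A = {g \<in> G_A A. g None = None}"

abbreviation Sym_P1 :: "(p1 \<Rightarrow> p1) monoid" where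
  "Sym_P1 \<equiv> BijGroup (UNIV :: p1 set)"

definition H_A_dd :: "real set \<Rightarrow> (p1 \<Rightarrow> p1) set" where
  "H_A_dd A = derived Sym_P1 (derived Sym_P1 (H_A A))"

end

theory Submission
  imports Defs
begin


lemma carrier_Sym: "carrier Sym_P1 = {f. bij f}"
  by (auto simp: BijGroup_def Bij_def)

lemma mult_Sym: "f \<in> carrier Sym_P1 \<Longrightarrow> g \<in> carrier Sym_P1 \<Longrightarrow> f \<otimes>\<^bsub>Sym_P1\<^esub> g = f \<circ> g"
  by (auto simp: BijGroup_def compose_def fun_eq_iff)

lemma one_Sym: "\<one>\<^bsub>Sym_P1\<^esub> = id"
  by (auto simp: BijGroup_def fun_eq_iff)

lemma grp: "group Sym_P1" by (rule group_BijGroup)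

lemma inv_Sym: "f \<in> carrier Sym_P1 \<Longrightarrow> inv\<^bsub>Sym_P1\<^esub> f \<circ> f = id"
  using group.l_inv[OF grp] group.inv_closed[OF grp] mult_Sym one_Sym by metis

definition gp :: "(p1 \<Rightarrow> p1) \<Rightarrow> real \<Rightarrow> real \<Rightarrow> bool" where
  "gp f a b \<longleftrightarrow> (\<exists>M. \<forall>x>M. f (Some x) = Some (a*x+b))"
definition gm :: "(p1 \<Rightarrow> p1) \<Rightarrow> real \<Rightarrow> real \<Rightarrow> bool" where
  "gm f a b \<longleftrightarrow> (\<exists>M. \<forall>x<M. f (Some x) = Some (a*x+b))"

lemma gp_comp: assumes "gp f a b" "gp g c d" "c > 0" shows "gp (f \<circ> g) (a*c) (a*d+b)"
proof -
  obtain M1 where M1: "\<forall>x>M1. f (Some x) = Some (a*x+b)" using assms(1) gp_def by auto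
  obtain M2 where M2: "\<forall>x>M2. g (Some x) = Some (c*x+d)" using assms(2) gp_def by auto
  have "\<forall>x>max M2 ((M1-d)/c). (f \<circ> g) (Some x) = Some (a*c*x+(a*d+b))"
  proof (intro allI impI)
    fix x assume x: "x > max M2 ((M1-d)/c)"
    then have "c*x+d > M1" using assms(3) by (simp add: field_simps)
    then show "(f \<circ> g) (Some x) = Some (a*c*x+(a*d+b))" using M1 M2 x by (simp add: algebra_simps)
  qed
  then show ?thesis unfolding gp_def by blast
qed

lemma gm_comp: assumes "gm f a b" "gm g c d" "c > 0" shows "gm (f \<circ> g) (a*c) (a*d+b)"
proof -
  obtain M1 where M1: "\<forall>x<M1. f (Some x) = Some (a*x+b)" using assms(1) gm_def by auto
  obtain M2 where M2: "\<forall>x<M2. g (Some x) = Some (c*x+d)" using assms(2) gm_def by auto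
  have "\<forall>x<min M2 ((M1-d)/c). (f \<circ> g) (Some x) = Some (a*c*x+(a*d+b))"
  proof (intro allI impI)
    fix x assume x: "x < min M2 ((M1-d)/c)"
    then have "c*x+d < M1" using assms(3) by (simp add: field_simps)
    then show "(f \<circ> g) (Some x) = Some (a*c*x+(a*d+b))" using M1 M2 x by (simp add: algebra_simps)
  qed
  then show ?thesis unfolding gm_def by blast
qed

lemma gp_solve: assumes "u \<circ> P = Q" "gp P a b" "gp Q a c" "a > 0" shows "gp u 1 (c-b)"
proof -
  obtain M1 where M1: "\<forall>x>M1. P (Some x) = Some (a*x+b)" using assms(2) gp_def by auto
  obtain M2 where M2: "\<forall>x>M2. Q (Some x) = Some (a*x+c)" using assms(3) gp_def by auto
  have "\<forall>y>a*max M1 M2 + b. u (Some y) = Some (1*y+(c-b))"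
  proof (intro allI impI)
    fix y assume s: "y > a*max M1 M2 + b"
    define x where "x = (y-b)/a"
    have "a*M1 \<le> a*max M1 M2" "a*M2 \<le> a*max M1 M2" using assms(4) by (simp_all add: mult_left_mono)
    then have "M1*a < y-b" "M2*a < y-b" using s by (simp_all add: mult.commute)
    then have "x > M1" "x > M2" using assms(4) unfolding x_def by (simp_all add: pos_less_divide_eq)
    then have "x > max M1 M2" by simp
    then have "P (Some x) = Some y" "Q (Some x) = Some (a*x+c)" using M1 M2 assms(4) x_def by auto
    moreover have "u (P (Some x)) = Q (Some x)" using assms(1) by (metis comp_apply)
    ultimately show "u (Some y) = Some (1*y+(c-b))" using assms(4) x_def by (simp add: field_simps)
  qed
  then show ?thesis unfolding gp_def by blast
qed

lemma gm_solve: assumes "u \<circ> P = Q" "gm P a b" "gm Q a c" "a > 0" shows "gm u 1 (c-b)"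
proof -
  obtain M1 where M1: "\<forall>x<M1. P (Some x) = Some (a*x+b)" using assms(2) gm_def by auto
  obtain M2 where M2: "\<forall>x<M2. Q (Some x) = Some (a*x+c)" using assms(3) gm_def by auto
  have "\<forall>y<a*min M1 M2 + b. u (Some y) = Some (1*y+(c-b))"
  proof (intro allI impI)
    fix y assume s: "y < a*min M1 M2 + b"
    define x where "x = (y-b)/a"
    have "a*min M1 M2 \<le> a*M1" "a*min M1 M2 \<le> a*M2" using assms(4) by (simp_all add: mult_left_mono)
    then have "y-b < M1*a" "y-b < M2*a" using s by (simp_all add: mult.commute)
    then have "x < M1" "x < M2" using assms(4) unfolding x_def by (simp_all add: pos_divide_less_eq)
    then have "x < min M1 M2" by simp
    then have "P (Some x) = Some y" "Q (Some x) = Some (a*x+c)" using M1 M2 assms(4) x_def by auto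
    moreover have "u (P (Some x)) = Q (Some x)" using assms(1) by (metis comp_apply)
    ultimately show "u (Some y) = Some (1*y+(c-b))" using assms(4) x_def by (simp add: field_simps)
  qed
  then show ?thesis unfolding gm_def by blast
qed

lemma gp_id: "gp id 1 0" unfolding gp_def by auto
lemma gm_id: "gm id 1 0" unfolding gm_def by auto

definition TR :: "(p1 \<Rightarrow> p1) set" where
  "TR = {f \<in> carrier Sym_P1. \<exists>b b'. gp f 1 b \<and> gm f 1 b'}"
definition ID :: "(p1 \<Rightarrow> p1) set" where
  "ID = {f \<in> carrier Sym_P1. gp f 1 0 \<and> gm f 1 0}"

lemma comm_eq: assumes "f \<in> carrier Sym_P1" "g \<in> carrier Sym_P1"
  shows "(f \<otimes>\<^bsub>Sym_P1\<^esub> g \<otimes>\<^bsub>Sym_P1\<^esub> inv\<^bsub>Sym_P1\<^esub> f \<otimes>\<^bsub>Sym_P1\<^esub> inv\<^bsub>Sym_P1\<^esub> g) \<circ> (g \<circ> f) = f \<circ> g"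
    (is "?u \<circ> _ = _")
proof -
  interpret group Sym_P1 by (rule grp)
  have c1: "\<And>x y. x \<in> carrier Sym_P1 \<Longrightarrow> y \<in> carrier Sym_P1 \<Longrightarrow> inv\<^bsub>Sym_P1\<^esub> x \<otimes>\<^bsub>Sym_P1\<^esub> (x \<otimes>\<^bsub>Sym_P1\<^esub> y) = y"
    by (simp add: m_assoc[symmetric])
  have "?u \<otimes>\<^bsub>Sym_P1\<^esub> (g \<otimes>\<^bsub>Sym_P1\<^esub> f) = f \<otimes>\<^bsub>Sym_P1\<^esub> g \<otimes>\<^bsub>Sym_P1\<^esub> inv\<^bsub>Sym_P1\<^esub> f \<otimes>\<^bsub>Sym_P1\<^esub> (inv\<^bsub>Sym_P1\<^esub> g \<otimes>\<^bsub>Sym_P1\<^esub> g) \<otimes>\<^bsub>Sym_P1\<^esub> f"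
    using assms by (simp add: m_assoc c1)
  also have "\<dots> = f \<otimes>\<^bsub>Sym_P1\<^esub> g \<otimes>\<^bsub>Sym_P1\<^esub> (inv\<^bsub>Sym_P1\<^esub> f \<otimes>\<^bsub>Sym_P1\<^esub> f)"
    using assms by (simp add: m_assoc c1)
  also have "\<dots> = f \<otimes>\<^bsub>Sym_P1\<^esub> g" using assms by simp
  finally have "?u \<otimes>\<^bsub>Sym_P1\<^esub> (g \<otimes>\<^bsub>Sym_P1\<^esub> f) = f \<otimes>\<^bsub>Sym_P1\<^esub> g" .
  moreover have "?u \<in> carrier Sym_P1" using assms by simp
  moreover have "g \<otimes>\<^bsub>Sym_P1\<^esub> f = g \<circ> f" "f \<otimes>\<^bsub>Sym_P1\<^esub> g = f \<circ> g" using assms by (simp_all add: mult_Sym)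
  ultimately show ?thesis using assms mult_Sym m_closed by metis
qed

lemma TR_sub: "subgroup TR Sym_P1"
proof -
  interpret group Sym_P1 by (rule grp)
  show ?thesis
  proof (rule subgroupI)
    show "TR \<subseteq> carrier Sym_P1" by (auto simp: TR_def)
    show "TR \<noteq> {}" using gp_id gm_id one_Sym one_closed unfolding TR_def by force
  next
    fix a assume a: "a \<in> TR"
    then obtain b b' where "gp a 1 b" "gm a 1 b'" "a \<in> carrier Sym_P1" by (auto simp: TR_def)
    moreover have "inv\<^bsub>Sym_P1\<^esub> a \<circ> a = id" using a inv_Sym TR_def by auto
    ultimately have "gp (inv\<^bsub>Sym_P1\<^esub> a) 1 (0 - b)" "gm (inv\<^bsub>Sym_P1\<^esub> a) 1 (0-b')"
      using gp_solve[of "inv\<^bsub>Sym_P1\<^esub> a" a id 1 b 0] gm_solve[of "inv\<^bsub>Sym_P1\<^esub> a" a id 1 b' 0] gp_id gm_id by auto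
    then show "inv\<^bsub>Sym_P1\<^esub> a \<in> TR" using a by (auto simp: TR_def)
  next
    fix a c assume "a \<in> TR" "c \<in> TR"
    then obtain b b' d d' where "gp a 1 b" "gm a 1 b'" "gp c 1 d" "gm c 1 d'" "a \<in> carrier Sym_P1" "c \<in> carrier Sym_P1" by (auto simp: TR_def)
    then show "a \<otimes>\<^bsub>Sym_P1\<^esub> c \<in> TR" using gp_comp[of a 1 b c 1 d] gm_comp[of a 1 b' c 1 d'] by (auto simp: TR_def mult_Sym carrier_Sym bij_comp)
  qed
qed

lemma ID_sub: "subgroup ID Sym_P1"
proof -
  interpret group Sym_P1 by (rule grp)
  show ?thesis
  proof (rule subgroupI)
    show "ID \<subseteq> carrier Sym_P1" by (auto simp: ID_def)
    show "ID \<noteq> {}" using gp_id gm_id one_Sym one_closed unfolding ID_def by force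
  next
    fix a assume a: "a \<in> ID"
    then have "gp a 1 0" "gm a 1 0" "a \<in> carrier Sym_P1" by (auto simp: ID_def)
    moreover have "inv\<^bsub>Sym_P1\<^esub> a \<circ> a = id" using a inv_Sym ID_def by auto
    ultimately have "gp (inv\<^bsub>Sym_P1\<^esub> a) 1 (0 - 0)" "gm (inv\<^bsub>Sym_P1\<^esub> a) 1 (0-0)"
      using gp_solve[of "inv\<^bsub>Sym_P1\<^esub> a" a id 1 0 0] gm_solve[of "inv\<^bsub>Sym_P1\<^esub> a" a id 1 0 0] gp_id gm_id by auto
    then show "inv\<^bsub>Sym_P1\<^esub> a \<in> ID" using a by (auto simp: ID_def)
  next
    fix a c assume "a \<in> ID" "c \<in> ID"
    then have "gp a 1 0" "gm a 1 0" "gp c 1 0" "gm c 1 0" "a \<in> carrier Sym_P1" "c \<in> carrier Sym_P1" by (auto simp: ID_def)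
    then show "a \<otimes>\<^bsub>Sym_P1\<^esub> c \<in> ID" using gp_comp[of a 1 0 c 1 0] gm_comp[of a 1 0 c 1 0] by (auto simp: ID_def mult_Sym carrier_Sym bij_comp)
  qed
qed

definition AF :: "(p1 \<Rightarrow> p1) set" where
  "AF = {f \<in> carrier Sym_P1. \<exists>a b a' b'. a > 0 \<and> a' > 0 \<and> gp f a b \<and> gm f a' b'}"

lemma dset1: "derived_set Sym_P1 AF \<subseteq> TR"
proof
  interpret group Sym_P1 by (rule grp)
  fix u assume "u \<in> derived_set Sym_P1 AF"
  then obtain f g where fg: "f \<in> AF" "g \<in> AF" and u: "u = f \<otimes>\<^bsub>Sym_P1\<^esub> g \<otimes>\<^bsub>Sym_P1\<^esub> inv\<^bsub>Sym_P1\<^esub> f \<otimes>\<^bsub>Sym_P1\<^esub> inv\<^bsub>Sym_P1\<^esub> g" by blast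
  obtain a b a' b' where f: "f \<in> carrier Sym_P1" "a>0" "a'>0" "gp f a b" "gm f a' b'" using fg by (auto simp: AF_def)
  obtain c d c' d' where g: "g \<in> carrier Sym_P1" "c>0" "c'>0" "gp g c d" "gm g c' d'" using fg by (auto simp: AF_def)
  have e: "u \<circ> (g \<circ> f) = f \<circ> g" using comm_eq f g u by simp
  have "gp (g \<circ> f) (c*a) (c*b+d)" "gp (f \<circ> g) (a*c) (a*d+b)" using gp_comp f g by auto
  then have "gp u 1 ((a*d+b) - (c*b+d))" using gp_solve[OF e] f g by (simp add: mult.commute)
  moreover
  have "gm (g \<circ> f) (c'*a') (c'*b'+d')" "gm (f \<circ> g) (a'*c') (a'*d'+b')" using gm_comp f g by auto
  then have "gm u 1 ((a'*d'+b') - (c'*b'+d'))" using gm_solve[OF e] f g by (simp add: mult.commute)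
  moreover have "u \<in> carrier Sym_P1" using u f g by simp
  ultimately show "u \<in> TR" unfolding TR_def by blast
qed

lemma dset2: "derived_set Sym_P1 TR \<subseteq> ID"
proof
  interpret group Sym_P1 by (rule grp)
  fix u assume "u \<in> derived_set Sym_P1 TR"
  then obtain f g where fg: "f \<in> TR" "g \<in> TR" and u: "u = f \<otimes>\<^bsub>Sym_P1\<^esub> g \<otimes>\<^bsub>Sym_P1\<^esub> inv\<^bsub>Sym_P1\<^esub> f \<otimes>\<^bsub>Sym_P1\<^esub> inv\<^bsub>Sym_P1\<^esub> g" by blast
  obtain b b' where f: "f \<in> carrier Sym_P1" "gp f 1 b" "gm f 1 b'" using fg by (auto simp: TR_def)
  obtain d d' where g: "g \<in> carrier Sym_P1" "gp g 1 d" "gm g 1 d'" using fg by (auto simp: TR_def)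
  have e: "u \<circ> (g \<circ> f) = f \<circ> g" using comm_eq f g u by simp
  have "gp (g \<circ> f) (1*1) (1*b+d)" "gp (f \<circ> g) (1*1) (1*d+b)" using gp_comp[of g 1 d f 1 b] gp_comp[of f 1 b g 1 d] f g by auto
  then have "gp u 1 ((d+b) - (b+d))" using gp_solve[OF e, of 1 "b+d" "d+b"] by simp
  moreover
  have "gm (g \<circ> f) (1*1) (1*b'+d')" "gm (f \<circ> g) (1*1) (1*d'+b')" using gm_comp[of g 1 d' f 1 b'] gm_comp[of f 1 b' g 1 d'] f g by auto
  then have "gm u 1 ((d'+b') - (b'+d'))" using gm_solve[OF e, of 1 "b'+d'" "d'+b'"] by simp
  moreover have "u \<in> carrier Sym_P1" using u f g by simp
  ultimately show "u \<in> ID" unfolding ID_def by simp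
qed

lemma dd_ID: assumes "X \<subseteq> AF" shows "derived Sym_P1 (derived Sym_P1 X) \<subseteq> ID"
proof -
  interpret group Sym_P1 by (rule grp)
  have "derived_set Sym_P1 X \<subseteq> TR" using dset1 assms by blast
  then have 1: "derived Sym_P1 X \<subseteq> TR" unfolding derived_def by (rule generate_subgroup_incl[OF _ TR_sub])
  have "derived_set Sym_P1 (derived Sym_P1 X) \<subseteq> ID" using dset2 1 by blast
  then show ?thesis unfolding derived_def[of _ "derived Sym_P1 X"] by (rule generate_subgroup_incl[OF _ ID_sub])
qed



lemma istop: "istopology P1_open"
  unfolding istopology_def
proof (intro conjI allI impI)
  fix S T :: "p1 set" assume S: "P1_open S" and T: "P1_open T"
  have o: "open {t. Some t \<in> S \<inter> T}"
    using S T unfolding P1_open_def by (simp add: Collect_conj_eq open_Int)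
  have "None \<in> S \<inter> T \<longrightarrow> (\<exists>M. \<forall>t. \<bar>t\<bar> > M \<longrightarrow> Some t \<in> S \<inter> T)"
  proof
    assume "None \<in> S \<inter> T"
    then obtain M1 M2 where "\<forall>t. \<bar>t\<bar> > M1 \<longrightarrow> Some t \<in> S" "\<forall>t. \<bar>t\<bar> > M2 \<longrightarrow> Some t \<in> T"
      using S T unfolding P1_open_def by blast
    then show "\<exists>M. \<forall>t. \<bar>t\<bar> > M \<longrightarrow> Some t \<in> S \<inter> T" by (intro exI[of _ "max M1 M2"]) auto
  qed
  then show "P1_open (S \<inter> T)" using o unfolding P1_open_def by blast
next
  fix K :: "p1 set set" assume K: "\<forall>S\<in>K. P1_open S"
  have "{t. Some t \<in> \<Union>K} = (\<Union>S\<in>K. {t. Some t \<in> S})" by auto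
  then have o: "open {t. Some t \<in> \<Union>K}" using K unfolding P1_open_def by (auto intro!: open_UN)
  have "None \<in> \<Union>K \<longrightarrow> (\<exists>M. \<forall>t. \<bar>t\<bar> > M \<longrightarrow> Some t \<in> \<Union>K)"
  proof
    assume "None \<in> \<Union>K"
    then obtain S where "S \<in> K" "None \<in> S" by auto
    then obtain M where "\<forall>t. \<bar>t\<bar> > M \<longrightarrow> Some t \<in> S" using K unfolding P1_open_def by blast
    then show "\<exists>M. \<forall>t. \<bar>t\<bar> > M \<longrightarrow> Some t \<in> \<Union>K" using \<open>S \<in> K\<close> by blast
  qed
  then show "P1_open (\<Union>K)" using o unfolding P1_open_def by blast
qed

lemma openin_P1: "openin P1_top = P1_open"
  unfolding P1_top_def using istop by simp

lemma P1_open_UNIV: "P1_open UNIV" unfolding P1_open_def by auto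

lemma topspace_P1: "topspace P1_top = UNIV"
  unfolding topspace_def openin_P1 using P1_open_UNIV by auto

lemma cont_Some: "continuous_map euclideanreal P1_top Some"
  unfolding continuous_map openin_P1 topspace_P1 by (auto simp: P1_open_def)

lemma cnone:
  assumes "continuous_map P1_top P1_top g" "g None = None"
  shows "\<exists>M. \<forall>t. \<bar>t\<bar> > M \<longrightarrow> g (Some t) = None \<or> (\<exists>s. g (Some t) = Some s \<and> \<bar>s\<bar> > K)"
proof -
  define U where "U = {p. p = None \<or> (\<exists>s. p = Some s \<and> \<bar>s\<bar> > K)}"
  have "{t. Some t \<in> U} = {t. K < \<bar>t\<bar>}" unfolding U_def by auto
  moreover have "open {t::real. K < \<bar>t\<bar>}" by (intro open_Collect_less continuous_intros)
  ultimately have "P1_open U" unfolding P1_open_def U_def by auto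
  then have "P1_open {x. g x \<in> U}" using assms(1) unfolding continuous_map openin_P1 topspace_P1 by auto
  moreover have "None \<in> {x. g x \<in> U}" using assms(2) U_def by auto
  ultimately obtain M where "\<forall>t. \<bar>t\<bar> > M \<longrightarrow> g (Some t) \<in> U" unfolding P1_open_def by auto
  then show ?thesis unfolding U_def by auto
qed

lemma c0:
  assumes cn: "\<And>K. \<exists>M. \<forall>t. \<bar>t\<bar> > M \<longrightarrow> g (Some t) = None \<or> (\<exists>s. g (Some t) = Some s \<and> \<bar>s\<bar> > K)"
    and det: "a*d - b*c = 1"
    and big: "\<And>N. \<exists>t\<in>T. \<bar>t\<bar> > N"
    and eq: "\<forall>t\<in>T. g (Some t) = mobius (a,b,c,d) (Some t)"
  shows "c = 0"
proof (rule ccontr)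
  assume c: "c \<noteq> 0"
  obtain M where M: "\<forall>t. \<bar>t\<bar> > M \<longrightarrow> g (Some t) = None \<or> (\<exists>s. g (Some t) = Some s \<and> \<bar>s\<bar> > \<bar>a/c\<bar> + 1)"
    using cn by blast
  obtain t where t: "t \<in> T" "\<bar>t\<bar> > max M ((\<bar>d\<bar> + 1/\<bar>c\<bar>)/\<bar>c\<bar>)" using big by blast
  have "\<bar>t\<bar> > (\<bar>d\<bar> + 1/\<bar>c\<bar>)/\<bar>c\<bar>" using t by simp
  then have "\<bar>d\<bar> + 1/\<bar>c\<bar> < \<bar>t\<bar> * \<bar>c\<bar>" using pos_divide_less_eq[of "\<bar>c\<bar>"] c by simp
  then have "\<bar>c\<bar> * \<bar>t\<bar> > \<bar>d\<bar> + 1/\<bar>c\<bar>" by (simp add: mult.commute)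
  moreover have "\<bar>c*t+d\<bar> \<ge> \<bar>c\<bar>*\<bar>t\<bar> - \<bar>d\<bar>" by (metis abs_mult abs_triangle_ineq2 diff_minus_eq_add abs_minus_cancel)
  ultimately have ctd: "\<bar>c*t+d\<bar> > 1/\<bar>c\<bar>" by linarith
  then have nz: "c*t+d \<noteq> 0" using c by auto
  have gv: "g (Some t) = Some ((a*t+b)/(c*t+d))" using eq t nz by simp
  then obtain s where s: "s = (a*t+b)/(c*t+d)" "\<bar>s\<bar> > \<bar>a/c\<bar> + 1" using M t by auto
  have "s - a/c = ((a*t+b)*c - a*(c*t+d))/((c*t+d)*c)" using c nz unfolding s(1) by (simp add: diff_frac_eq)
  also have "\<dots> = -1/(c*(c*t+d))" using det by (simp add: algebra_simps)
  finally have e: "s - a/c = -1/(c*(c*t+d))" .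
  have "\<bar>c\<bar> * \<bar>c*t+d\<bar> > 1" using ctd c by (simp add: field_simps)
  then have "\<bar>-1/(c*(c*t+d))\<bar> < 1" by (simp add: abs_mult)
  then have "\<bar>s - a/c\<bar> < 1" using e by simp
  then show False using s(2) by linarith
qed

lemma germ_from_piece:
  assumes cn: "\<And>K. \<exists>M. \<forall>t. \<bar>t\<bar> > M \<longrightarrow> g (Some t) = None \<or> (\<exists>s. g (Some t) = Some s \<and> \<bar>s\<bar> > K)"
    and det: "a*d - b*c = 1"
    and big: "\<And>N. \<exists>t\<in>T. \<bar>t\<bar> > N"
    and eq: "\<forall>t\<in>T. g (Some t) = mobius (a,b,c,d) (Some t)"
  shows "a*a > 0 \<and> (\<forall>t\<in>T. g (Some t) = Some (a*a*t + a*b))"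
proof -
  have c: "c = 0" using c0[OF cn det big eq] .
  then have ad: "a*d = 1" using det by simp
  then have "a \<noteq> 0" "d \<noteq> 0" by auto
  moreover have "\<forall>t. (a*t+b)/d = a*a*t + a*b"
  proof
    fix t have "(a*t+b)/d = a*d*((a*t+b)/d)" using ad by simp
    also have "\<dots> = a*(a*t+b)" using \<open>d \<noteq> 0\<close> by simp
    finally show "(a*t+b)/d = a*a*t + a*b" by (simp add: algebra_simps)
  qed
  moreover have "a*a > 0" using \<open>a \<noteq> 0\<close> by (auto simp: zero_less_mult_iff)
  ultimately show ?thesis using eq c by simp
qed



lemma HA_AF: assumes gH: "g \<in> H_A A" shows "g \<in> AF"
proof -
  have hm: "homeomorphic_map P1_top P1_top g" and gN: "g None = None" using gH by (auto simp: H_A_def G_A_def)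
  obtain B where B: "finite B" "B \<subseteq> P_set A"
    "\<forall>C \<in> connected_components_of (subtopology P1_top (UNIV - B)). \<exists>M \<in> SL2 A. \<forall>p\<in>C. g p = mobius M p"
    using gH by (auto simp: H_A_def G_A_def)
  have bg: "bij g" using homeomorphic_imp_injective_map[OF hm] homeomorphic_imp_surjective_map[OF hm]
    unfolding topspace_P1 bij_def by auto
  have cn: "\<And>K. \<exists>M. \<forall>t. \<bar>t\<bar> > M \<longrightarrow> g (Some t) = None \<or> (\<exists>s. g (Some t) = Some s \<and> \<bar>s\<bar> > K)"
    using cnone[OF homeomorphic_imp_continuous_map[OF hm] gN] by blast
  have gen: "\<exists>a b. a*a > 0 \<and> (\<forall>t\<in>T. g (Some t) = Some (a*a*t + a*b))"
    if T: "connected T" "T \<noteq> {}" "\<forall>t\<in>T. Some t \<notin> B" "\<And>N. \<exists>t\<in>T. \<bar>t\<bar> > N" for T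
  proof -
    have "connectedin P1_top (Some ` T)"
      using connectedin_continuous_map_image[OF cont_Some] T(1) by simp
    then have ci: "connectedin (subtopology P1_top (UNIV - B)) (Some ` T)"
      using T(3) by (auto simp: connectedin_subtopology)
    have nt: "P1_top \<noteq> trivial_topology" using topspace_P1 by (metis UNIV_not_empty null_topspace_iff_trivial)
    have "subtopology P1_top (UNIV - B) \<noteq> trivial_topology"
      using T(2,3) nt by (auto simp: subtopology_trivial_iff topspace_P1 simp del: null_topspace_iff_trivial)
    with ci obtain C where C: "C \<in> connected_components_of (subtopology P1_top (UNIV - B))" "Some ` T \<subseteq> C"
      using exists_connected_component_of_superset by blast
    then obtain M where M: "M \<in> SL2 A" "\<forall>p\<in>C. g p = mobius M p" using B(3) by blast
    obtain a b c d where abcd: "M = (a,b,c,d)" by (cases M) auto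
    have det: "a*d - b*c = 1" using M(1) abcd by (auto simp: SL2_def)
    have "\<forall>t\<in>T. g (Some t) = mobius (a,b,c,d) (Some t)" using M(2) C(2) abcd by auto
    from germ_from_piece[OF cn det T(4) this] show ?thesis by blast
  qed
  have "finite (Some -` B)" using B(1) by (simp add: finite_vimageI)
  then obtain M0 where M0: "\<forall>t\<in>Some -` B. norm t \<le> M0" using finite_imp_bounded bounded_iff by blast
  have nb: "Some t \<notin> B" if "\<bar>t\<bar> > M0" for t using M0 that by force
  obtain a b where ab: "a*a > 0" "\<forall>t\<in>{max M0 0<..}. g (Some t) = Some (a*a*t + a*b)"
  proof -
    have "\<exists>t\<in>{max M0 0<..}. \<bar>t\<bar> > N" for N by (intro bexI[of _ "\<bar>N\<bar> + \<bar>M0\<bar> + 1"]) auto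
    moreover have "\<forall>t\<in>{max M0 0<..}. Some t \<notin> B" using nb by auto
    ultimately show ?thesis using gen[of "{max M0 0<..}"] that by auto
  qed
  obtain a' b' where ab': "a'*a' > 0" "\<forall>t\<in>{..< - max M0 0}. g (Some t) = Some (a'*a'*t + a'*b')"
  proof -
    have "\<exists>t\<in>{..< - max M0 0}. \<bar>t\<bar> > N" for N by (intro bexI[of _ "- \<bar>N\<bar> - \<bar>M0\<bar> - 1"]) auto
    moreover have "\<forall>t\<in>{..< - max M0 0}. Some t \<notin> B" using nb by auto
    ultimately show ?thesis using gen[of "{..< - max M0 0}"] that by auto
  qed
  have "gp g (a*a) (a*b)" unfolding gp_def using ab(2) by auto
  moreover have "gm g (a'*a') (a'*b')" unfolding gm_def using ab'(2) by auto
  ultimately show ?thesis unfolding AF_def carrier_Sym using bg ab(1) ab'(1) by blast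
qed

lemma HAdd_ID: "H_A_dd A \<subseteq> ID"
  unfolding H_A_dd_def using dd_ID HA_AF by blast



definition u0 :: real where "u0 = (1 - sqrt 5)/2"
definition u1 :: real where "u1 = (1 + sqrt 5)/2"
definition ph0 :: "real \<Rightarrow> real" where "ph0 u = (2*u+1)/(u+1)"
definition ph1 :: "real \<Rightarrow> real" where "ph1 v = (v-1)/(2-v)"

lemma s5: "2 < sqrt (5::real)" "sqrt (5::real) < 3" "sqrt (5::real) * sqrt 5 = 5"
proof -
  show "2 < sqrt (5::real)" by (rule real_less_rsqrt) simp
  show "sqrt (5::real) < 3" by (rule real_less_lsqrt) auto
  show "sqrt (5::real) * sqrt 5 = 5" by simp
qed

lemma ubounds: "-1 < u0" "u0 < 0" "0 < u1" "u1 < 2" "u0*u0 = u0 + 1" "u1*u1 = u1+1" "u0 < 1/2" "1/2 < u1"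
  using s5(1,2) unfolding u0_def u1_def by (auto simp: field_simps algebra_simps)

lemma ph0_in: assumes "u0 \<le> u" "u \<le> u1" shows "u0 \<le> ph0 u" "ph0 u \<le> u1"
proof -
  have p: "u+1 > 0" using assms ubounds by linarith
  have "ph0 u - u0 = (2 - u0)*(u-u0)/(u+1)" unfolding ph0_def using p ubounds(5)
    by (simp add: field_simps; (simp add: algebra_simps power2_eq_square)?)
  moreover have "(2 - u0)*(u-u0)/(u+1) \<ge> 0" using p assms ubounds by simp
  ultimately show "u0 \<le> ph0 u" by linarith
  have "u1 - ph0 u = (2 - u1)*(u1-u)/(u+1)" unfolding ph0_def using p ubounds(6)
    by (simp add: field_simps; (simp add: algebra_simps power2_eq_square)?)
  moreover have "(2 - u1)*(u1-u)/(u+1) \<ge> 0" using p assms ubounds by simp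
  ultimately show "ph0 u \<le> u1" by linarith
qed

lemma ph1_in: assumes "u0 \<le> u" "u \<le> u1" shows "u0 \<le> ph1 u" "ph1 u \<le> u1"
proof -
  have p: "2-u > 0" using assms ubounds by linarith
  have "ph1 u - u0 = (1 + u0)*(u-u0)/(2-u)" unfolding ph1_def using p ubounds(5)
    by (simp add: field_simps; (simp add: algebra_simps power2_eq_square)?)
  moreover have "(1 + u0)*(u-u0)/(2-u) \<ge> 0" using p assms ubounds by simp
  ultimately show "u0 \<le> ph1 u" by linarith
  have "u1 - ph1 u = (1 + u1)*(u1-u)/(2-u)" unfolding ph1_def using p ubounds(6)
    by (simp add: field_simps; (simp add: algebra_simps power2_eq_square)?)
  moreover have "(1 + u1)*(u1-u)/(2-u) \<ge> 0" using p assms ubounds by simp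
  ultimately show "ph1 u \<le> u1" by linarith
qed

lemma ph10: "u + 1 \<noteq> 0 \<Longrightarrow> ph1 (ph0 u) = u"
  unfolding ph0_def ph1_def by (simp add: field_simps)

lemma ph01: "v \<noteq> 2 \<Longrightarrow> ph0 (ph1 v) = v"
  unfolding ph0_def ph1_def by (simp add: field_simps)

lemma ph_fix: "ph0 u0 = u0" "ph0 u1 = u1" "ph1 u0 = u0" "ph1 u1 = u1"
  using ubounds unfolding ph0_def ph1_def by (simp_all add: field_simps algebra_simps)

definition cl :: "real \<Rightarrow> real" where "cl u = max u0 (min u1 u)"
definition Fd :: "(real \<Rightarrow> real) \<Rightarrow> real \<Rightarrow> real" where "Fd ph u = ph (cl u) + u - cl u"

lemma Fd_case: assumes "ph u0 = u0" "ph u1 = u1"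
  shows "Fd ph u = (if u0 \<le> u \<and> u \<le> u1 then ph u else u)"
  using assms ubounds unfolding Fd_def cl_def by (auto simp: max_def min_def)

lemma Fd_cont: assumes "continuous_on {u0..u1} ph" shows "continuous_on UNIV (Fd ph)"
proof -
  have "continuous_on UNIV cl" unfolding cl_def by (intro continuous_intros)
  moreover have "cl ` UNIV \<subseteq> {u0..u1}" using ubounds unfolding cl_def by auto
  ultimately have "continuous_on UNIV (\<lambda>u. ph (cl u))" using continuous_on_compose2[OF assms] by blast
  then show ?thesis unfolding Fd_def using \<open>continuous_on UNIV cl\<close> by (intro continuous_intros)
qed

lemma ph0_cont: "continuous_on {u0..u1} ph0"
  unfolding ph0_def using ubounds by (intro continuous_intros) auto
lemma ph1_cont: "continuous_on {u0..u1} ph1"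
  unfolding ph1_def using ubounds by (intro continuous_intros) auto

definition F0 where "F0 = Fd ph0"
definition F1 where "F1 = Fd ph1"

lemma F0_case: "F0 u = (if u0 \<le> u \<and> u \<le> u1 then ph0 u else u)"
  unfolding F0_def by (rule Fd_case) (simp_all add: ph_fix)
lemma F1_case: "F1 u = (if u0 \<le> u \<and> u \<le> u1 then ph1 u else u)"
  unfolding F1_def by (rule Fd_case) (simp_all add: ph_fix)

lemma F10: "F1 (F0 u) = u"
  using ph0_in[of u] ubounds by (auto simp: F0_case F1_case ph10)
lemma F01: "F0 (F1 u) = u"
  using ph1_in[of u] ubounds by (auto simp: F0_case F1_case ph01)



definition hk :: "real \<Rightarrow> (real \<Rightarrow> real) \<Rightarrow> p1 \<Rightarrow> p1" where
  "hk k F p = (case p of None \<Rightarrow> None | Some t \<Rightarrow> Some (k + F (t - k)))"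

lemma hk_simps[simp]: "hk k F None = None" "hk k F (Some t) = Some (k + F (t - k))"
  by (simp_all add: hk_def)

lemma hk_cont:
  assumes c: "continuous_on UNIV F" and R: "\<And>u. \<bar>u\<bar> > R \<Longrightarrow> F u = u"
  shows "continuous_map P1_top P1_top (hk k F)"
  unfolding continuous_map openin_P1 topspace_P1
proof (intro conjI allI impI)
  show "range (hk k F) \<subseteq> UNIV" by simp
  fix U assume U: "P1_open U"
  let ?V = "{x \<in> UNIV. hk k F x \<in> U}"
  have e: "{t. Some t \<in> ?V} = (\<lambda>t. k + F (t - k)) -` {s. Some s \<in> U}" by auto
  have ou: "open {s. Some s \<in> U}" using U unfolding P1_open_def by blast
  have cc: "continuous_on UNIV (\<lambda>t. k + F (t - k))"
    by (intro continuous_intros continuous_on_compose2[OF c]) auto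
  have o: "open {t. Some t \<in> ?V}" unfolding e by (rule open_vimage[OF ou cc])
  have "None \<in> ?V \<longrightarrow> (\<exists>M. \<forall>t. \<bar>t\<bar> > M \<longrightarrow> Some t \<in> ?V)"
  proof
    assume "None \<in> ?V"
    then have "None \<in> U" by simp
    then obtain M where M: "\<forall>t. \<bar>t\<bar> > M \<longrightarrow> Some t \<in> U" using U unfolding P1_open_def by blast
    have "\<forall>t. \<bar>t\<bar> > \<bar>M\<bar> + \<bar>R\<bar> + \<bar>k\<bar> \<longrightarrow> Some t \<in> ?V"
    proof (intro allI impI)
      fix t assume t: "\<bar>t\<bar> > \<bar>M\<bar> + \<bar>R\<bar> + \<bar>k\<bar>"
      then have "\<bar>t - k\<bar> > R" by linarith
      then have "F (t - k) = t - k" by (rule R)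
      then show "Some t \<in> ?V" using M t by auto
    qed
    then show "\<exists>M. \<forall>t. \<bar>t\<bar> > M \<longrightarrow> Some t \<in> ?V" by blast
  qed
  then show "P1_open ?V" using o unfolding P1_open_def by blast
qed

lemma F0_out: "\<bar>u\<bar> > 2 \<Longrightarrow> F0 u = u" using ubounds by (auto simp: F0_case)
lemma F1_out: "\<bar>u\<bar> > 2 \<Longrightarrow> F1 u = u" using ubounds by (auto simp: F1_case)

lemma F0_cont: "continuous_on UNIV F0" unfolding F0_def by (rule Fd_cont[OF ph0_cont])
lemma F1_cont: "continuous_on UNIV F1" unfolding F1_def by (rule Fd_cont[OF ph1_cont])

lemma hk_homeo: "homeomorphic_map P1_top P1_top (hk k F0)"
  unfolding homeomorphic_map_maps homeomorphic_maps_def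
proof (intro exI[of _ "hk k F1"] conjI)
  show "continuous_map P1_top P1_top (hk k F0)" by (rule hk_cont[OF F0_cont F0_out])
  show "continuous_map P1_top P1_top (hk k F1)" by (rule hk_cont[OF F1_cont F1_out])
  show "\<forall>x\<in>topspace P1_top. hk k F1 (hk k F0 x) = x"
    by (intro ballI, case_tac x) (auto simp: F10)
  show "\<forall>x\<in>topspace P1_top. hk k F0 (hk k F1 x) = x"
    by (intro ballI, case_tac x) (auto simp: F01)
qed

definition Mk :: "real \<Rightarrow> mat2" where "Mk k = (2+k, 1-k-k*k, 1, 1-k)"

lemma mob_Mk: assumes nz: "u + 1 \<noteq> 0" shows "mobius (Mk k) (Some (k+u)) = Some (k + ph0 u)"
proof -
  have den: "1*(k+u)+(1-k) = u+1" by simp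
  have num: "(2+k)*(k+u) + (1-k-k*k) = k*(u+1) + (2*u+1)" by (simp add: algebra_simps)
  have eq: "(k*(u+1) + (2*u+1))/(u+1) = k + (2*u+1)/(u+1)" using nz by (simp add: add_divide_distrib)
  have "mobius (Mk k) (Some (k+u)) = Some (((2+k)*(k+u) + (1-k-k*k))/(1*(k+u)+(1-k)))"
    unfolding Mk_def using nz by simp
  then show ?thesis unfolding ph0_def by (simp only: den num eq)
qed

lemma subring_facts: assumes "is_subring A"
  shows "0 \<in> A" "1 \<in> A" "x \<in> A \<Longrightarrow> y \<in> A \<Longrightarrow> x + y \<in> A"
    "x \<in> A \<Longrightarrow> y \<in> A \<Longrightarrow> x - y \<in> A" "x \<in> A \<Longrightarrow> y \<in> A \<Longrightarrow> x * y \<in> A"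
proof -
  have 1: "1 \<in> A" and c: "\<forall>x\<in>A. \<forall>y\<in>A. x - y \<in> A \<and> x * y \<in> A" using assms is_subring_def by auto
  show "1 \<in> A" by (rule 1)
  show z: "0 \<in> A" using 1 c by force
  show "x \<in> A \<Longrightarrow> y \<in> A \<Longrightarrow> x - y \<in> A" "x \<in> A \<Longrightarrow> y \<in> A \<Longrightarrow> x * y \<in> A" using c by auto
  assume "x \<in> A" "y \<in> A"
  then have "0 - y \<in> A" using c z by blast
  then have "x - (0 - y) \<in> A" using c \<open>x \<in> A\<close> by blast
  then show "x + y \<in> A" by simp
qed

lemma nat_in: "is_subring A \<Longrightarrow> real n \<in> A"
proof (induction n)
  case 0 then show ?case using subring_facts(1)[OF "0.prems"] by simp
next
  case (Suc n)
  then have "real n + 1 \<in> A" using subring_facts(2,3)[OF Suc.prems] by blast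
  then show ?case by (simp add: add.commute)
qed

lemma Mk_SL2: assumes "is_subring A" "k \<in> A" shows "Mk k \<in> SL2 A"
proof -
  note sf = subring_facts[OF assms(1)]
  have two: "2 \<in> A" using sf(2) sf(3)[of 1 1] by simp
  have "2 + k \<in> A" "1 - k \<in> A" "1 - k - k*k \<in> A" using sf two assms(2) by auto
  moreover have "(2+k)*(1-k) - (1-k-k*k)*1 = 1" by (simp add: algebra_simps)
  ultimately show ?thesis unfolding Mk_def SL2_def using sf(2) by auto
qed

lemma Mk_hyp: "hyperbolic (Mk k)" unfolding Mk_def hyperbolic_def by simp

lemma fix_P: assumes "is_subring A" "k \<in> A"
  shows "Some (k+u0) \<in> P_set A" "Some (k+u1) \<in> P_set A"
proof -
  have "mobius (Mk k) (Some (k+u0)) = Some (k+u0)" "mobius (Mk k) (Some (k+u1)) = Some (k+u1)"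
    using mob_Mk[of u0 k] mob_Mk[of u1 k] ph_fix ubounds by auto
  then show "Some (k+u0) \<in> P_set A" "Some (k+u1) \<in> P_set A"
    unfolding P_set_def using Mk_SL2[OF assms] Mk_hyp by blast+
qed

lemma hk_in: assumes A: "is_subring A" "k \<in> A" shows "hk k F0 \<in> H_A A"
proof -
  define B where "B = {Some (k+u0), Some (k+u1)}"
  define I where "I = Some ` {k+u0<..<k+u1}"
  define J where "J = insert None (Some ` ({..<k+u0} \<union> {k+u1<..}))"
  have oI: "openin P1_top I"
  proof -
    have "{t. Some t \<in> I} = {k+u0<..<k+u1}" unfolding I_def by auto
    then show ?thesis unfolding openin_P1 P1_open_def I_def by auto
  qed
  have oJ: "openin P1_top J"
  proof -
    have "{t. Some t \<in> J} = {..<k+u0} \<union> {k+u1<..}" unfolding J_def by auto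
    moreover have "\<forall>t. \<bar>t\<bar> > \<bar>k\<bar> + 2 \<longrightarrow> Some t \<in> J" unfolding J_def using ubounds by auto
    ultimately show ?thesis unfolding openin_P1 P1_open_def by auto
  qed
  have memI: "Some t \<in> I \<longleftrightarrow> k+u0 < t \<and> t < k+u1" for t unfolding I_def by (simp add: inj_image_mem_iff)
  have memJ: "Some t \<in> J \<longleftrightarrow> t < k+u0 \<or> k+u1 < t" for t unfolding J_def by (simp add: inj_image_mem_iff)
  have IJ1: "p \<in> I \<union> J" if "p \<notin> B" for p
  proof (cases p)
    case None then show ?thesis unfolding J_def by simp
  next
    case (Some t)
    then have "t \<noteq> k+u0" "t \<noteq> k+u1" using that unfolding B_def by auto
    then have "t < k+u0 \<or> (k+u0 < t \<and> t < k+u1) \<or> k+u1 < t" by linarith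
    then show ?thesis unfolding Some using memI memJ by blast
  qed
  have IJ2: "False" if pI: "p \<in> I" and pJ: "p \<in> J" for p
  proof -
    obtain t where t0: "t \<in> {k+u0<..<k+u1}" "p = Some t" using pI unfolding I_def by blast
    then have t: "p = Some t" "k+u0 < t" "t < k+u1" by auto
    then have "t < k+u0 \<or> k+u1 < t" using pJ memJ by auto
    then show False using t by linarith
  qed
  have IJ: "UNIV - B \<subseteq> I \<union> J" "I \<inter> J = {}" using IJ1 IJ2 by blast+
  have pieces: "\<exists>M \<in> SL2 A. \<forall>p\<in>C. hk k F0 p = mobius M p"
    if C: "C \<in> connected_components_of (subtopology P1_top (UNIV - B))" for C
  proof -
    have "connectedin (subtopology P1_top (UNIV - B)) C" using C by (rule connectedin_connected_components_of)
    then have cC: "connectedin P1_top C" and sC: "C \<subseteq> UNIV - B" by (auto simp: connectedin_subtopology)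
    have "C \<subseteq> I \<or> C \<subseteq> J"
    proof (rule ccontr)
      assume "\<not> (C \<subseteq> I \<or> C \<subseteq> J)"
      then have "I \<inter> C \<noteq> {}" "J \<inter> C \<noteq> {}" using sC IJ by blast+
      moreover have "C \<subseteq> I \<union> J" "I \<inter> J \<inter> C = {}" using sC IJ by blast+
      ultimately show False using cC oI oJ unfolding connectedin by blast
    qed
    then show ?thesis
    proof
      assume CI: "C \<subseteq> I"
      have "\<forall>p\<in>C. hk k F0 p = mobius (Mk k) p"
      proof
        fix p assume "p \<in> C"
        then obtain t where t: "p = Some t" "k+u0 < t" "t < k+u1" using CI I_def by auto
        define u where "u = t - k"
        have tu: "t = k + u" "u0 < u" "u < u1" using t u_def by auto
        then have "u + 1 \<noteq> 0" using ubounds by auto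
        then show "hk k F0 p = mobius (Mk k) p" using t tu mob_Mk[of u k] by (simp add: F0_case)
      qed
      then show ?thesis using Mk_SL2[OF A] by blast
    next
      assume CJ: "C \<subseteq> J"
      have "(1,0,0,1) \<in> SL2 A" using subring_facts(1,2)[OF A(1)] unfolding SL2_def by auto
      moreover have "\<forall>p\<in>C. hk k F0 p = mobius (1,0,0,1) p"
      proof
        fix p assume "p \<in> C"
        then have "p \<in> J" using CJ by auto
        then show "hk k F0 p = mobius (1,0,0,1) p" unfolding J_def by (auto simp: F0_case)
      qed
      ultimately show ?thesis by blast
    qed
  qed
  have "B \<subseteq> P_set A" unfolding B_def using fix_P[OF A] by auto
  moreover have "finite B" unfolding B_def by simp
  ultimately show ?thesis unfolding H_A_def G_A_def using hk_homeo pieces by auto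
qed



lemma bound: "finite S \<Longrightarrow> S \<subseteq> ID \<Longrightarrow> \<exists>M. \<forall>s\<in>S. \<forall>t>M. s (Some t) = Some t"
proof (induction S rule: finite_induct)
  case empty then show ?case by simp
next
  case (insert s S)
  then obtain M where M: "\<forall>s\<in>S. \<forall>t>M. s (Some t) = Some t" by auto
  have "gp s 1 0" using insert.prems ID_def by auto
  then obtain M' where M': "\<forall>t>M'. s (Some t) = Some t" unfolding gp_def by auto
  show ?case using M M' by (intro exI[of _ "max M M'"]) auto
qed

theorem proposition7:
  fixes A :: "real set" and S :: "(p1 \<Rightarrow> p1) set"
  assumes "is_subring A"
    and "finite S"
    and "S \<subseteq> H_A_dd A"
  shows "\<exists>h \<in> H_A A. h \<noteq> id \<and> (\<forall>s \<in> S. h \<circ> s = s \<circ> h)"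
proof -
  have SI: "S \<subseteq> ID" using assms(3) HAdd_ID by blast
  obtain Mall where Mall: "\<forall>s\<in>S. \<forall>t>Mall. s (Some t) = Some t" using bound[OF assms(2) SI] by blast
  define N where "N = nat \<lceil>\<bar>Mall\<bar>\<rceil> + 2"
  define k where "k = real N"
  have kA: "k \<in> A" unfolding k_def by (rule nat_in[OF assms(1)])
  have kM: "k > Mall + 1" unfolding k_def N_def by linarith
  define h where "h = hk k F0"
  have hH: "h \<in> H_A A" unfolding h_def by (rule hk_in[OF assms(1) kA])
  have "h (Some (k + 1/2)) = Some (k + ph0 (1/2))" unfolding h_def using ubounds by (simp add: F0_case)
  moreover have "ph0 (1/2) = 4/3" unfolding ph0_def by simp
  ultimately have "h (Some (k + 1/2)) \<noteq> Some (k + 1/2)" by simp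
  then have hid: "h \<noteq> id" by auto
  define R where "R = {p. \<exists>t. p = Some t \<and> u0 \<le> t - k \<and> t - k \<le> u1}"
  have comm: "h \<circ> s = s \<circ> h" if sS: "s \<in> S" for s
  proof
    fix x
    have sR: "s p = p" if pR: "p \<in> R" for p
    proof -
      obtain t where t: "p = Some t" "u0 \<le> t - k" using pR R_def by auto
      then have "t > Mall" using kM ubounds by linarith
      then show ?thesis using Mall sS t by auto
    qed
    have hR: "h p \<in> R" if pR: "p \<in> R" for p
    proof -
      obtain t where t: "p = Some t" "u0 \<le> t - k" "t - k \<le> u1" using pR R_def by auto
      then have "h p = Some (k + ph0 (t - k))" unfolding h_def by (simp add: F0_case)
      moreover have "u0 \<le> ph0 (t-k)" "ph0 (t-k) \<le> u1" using ph0_in t by auto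
      ultimately show ?thesis unfolding R_def by auto
    qed
    have hnR: "h p = p" if "p \<notin> R" for p
    proof (cases p)
      case None then show ?thesis unfolding h_def by simp
    next
      case (Some t)
      then have "\<not> (u0 \<le> t - k \<and> t - k \<le> u1)" using that R_def by auto
      then have "F0 (t - k) = t - k" using F0_case[of "t-k"] by presburger
      then show ?thesis unfolding h_def Some by simp
    qed
    have bs: "bij s" using sS SI ID_def carrier_Sym by auto
    show "(h \<circ> s) x = (s \<circ> h) x"
    proof (cases "x \<in> R")
      case True then show ?thesis using sR hR by simp
    next
      case False
      have "s x \<notin> R"
      proof
        assume "s x \<in> R"
        then have "s (s x) = s x" by (rule sR)
        then have "s x = x" using bs by (simp add: bij_def inj_eq)
        then show False using False \<open>s x \<in> R\<close> by simp
      qed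
      then show ?thesis using hnR False by simp
    qed
  qed
  show ?thesis using hH hid comm by blast
qed

end
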